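(* There is an absolute constant $c>0$ such that the following holds. Let $A$ be a finite subset of $\mathbb{R}$ with $A\neq\{0\}$, and let $B$ and $C$ be finite sets of real numbers with $B+C\neq\{0\}$. Then $$|A(B+C)|\ge c\,(|A||B||C|)^{1/2}.$$
   Context: $B+C=\{b+c:b\in B,c\in C\}$ and $A(B+C)=\{a(b+c):a\in A,b\in B,c\in C\}$. *)

theory Defs
  imports Complex_Main
begin

definition sumset :: "real set \<Rightarrow> real set \<Rightarrow> real set" where
  "sumset B C = {b + c | b c. b \<in> B \<and> c \<in> C}"

definition prodsumset :: "real set \<Rightarrow> real set \<Rightarrow> real set \<Rightarrow> real set" where
  "prodsumset A B C = {a * (b + c) | a b c. a \<in> A \<and> b \<in> B \<and> c \<in> C}"

end

theory Submission
  imports Defs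
begin

lemma rank_bound:
  fixes X :: "real set" and x D :: real
  assumes fX: "finite X" and xX: "x \<in> X" and D: "0 \<le> D"
  shows "real (card {y\<in>X. x < y \<and> real (card {z\<in>X. x \<le> z \<and> z < y}) \<le> D}) \<le> D"
proof -
  define f where "f = (\<lambda>y. card {z\<in>X. x \<le> z \<and> z < y})"
  define S where "S = {y\<in>X. x < y \<and> real (f y) \<le> D}"
  have mono: "f y < f y'" if "y \<in> S" "y' \<in> S" "y < y'" for y y'
  proof -
    have yX: "y \<in> X" and xy: "x < y" using that(1) unfolding S_def by auto
    have s1: "{z\<in>X. x \<le> z \<and> z < y} \<subseteq> {z\<in>X. x \<le> z \<and> z < y'}"
      using that(3) by auto
    have s2: "y \<in> {z\<in>X. x \<le> z \<and> z < y'}" using yX xy that(3) by simp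
    have s3: "y \<notin> {z\<in>X. x \<le> z \<and> z < y}" by simp
    have sub: "{z\<in>X. x \<le> z \<and> z < y} \<subset> {z\<in>X. x \<le> z \<and> z < y'}"
      using s1 s2 s3 by blast
    have fin: "finite {z\<in>X. x \<le> z \<and> z < y'}" using fX by simp
    show ?thesis unfolding f_def using psubset_card_mono[OF fin sub] .
  qed
  have inj: "inj_on f S"
  proof (rule inj_onI)
    fix y y' assume y: "y \<in> S" and y': "y' \<in> S" and e: "f y = f y'"
    show "y = y'"
    proof (rule ccontr)
      assume "y \<noteq> y'"
      then have "y < y' \<or> y' < y" by linarith
      then show False
      proof
        assume "y < y'" then have "f y < f y'" by (rule mono[OF y y'])
        then show False using e by simp
      next
        assume "y' < y" then have "f y' < f y" by (rule mono[OF y' y])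
        then show False using e by simp
      qed
    qed
  qed
  have img: "f ` S \<subseteq> {1..nat \<lfloor>D\<rfloor>}"
  proof
    fix v assume "v \<in> f ` S"
    then obtain y where y: "y \<in> S" "v = f y" by auto
    have xy: "x < y" using y by (simp add: S_def)
    have "x \<in> {z\<in>X. x \<le> z \<and> z < y}" using xy xX by simp
    moreover have "finite {z\<in>X. x \<le> z \<and> z < y}" using fX by simp
    ultimately have "f y > 0" unfolding f_def using card_gt_0_iff by blast
    then have "f y \<ge> 1" by simp
    moreover have "real (f y) \<le> D" using y by (simp add: S_def)
    then have "f y \<le> nat \<lfloor>D\<rfloor>"
      using D by (simp add: le_nat_iff le_floor_iff)
    ultimately show "v \<in> {1..nat \<lfloor>D\<rfloor>}" using y by simp
  qed
  have "card S = card (f ` S)" using inj by (simp add: card_image)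
  also have "\<dots> \<le> card {1..nat \<lfloor>D\<rfloor>}" by (rule card_mono[OF _ img]) simp
  also have "\<dots> = nat \<lfloor>D\<rfloor>" by simp
  finally have "real (card S) \<le> real (nat \<lfloor>D\<rfloor>)" by simp
  also have "\<dots> \<le> D" using D by linarith
  finally show ?thesis unfolding S_def f_def .
qed

lemma core:
  fixes A B C X :: "real set"
  assumes fA: "finite A" and fB: "finite B" and fC: "finite C"
    and pos: "\<forall>a\<in>A. a > 0"
    and X: "X = prodsumset A B C"
  shows "real (card A) * real (card B) * (real (card C) - 1) \<le> 4 * real (card X)^2"
proof (cases "A = {} \<or> B = {} \<or> card C \<le> 1")
  case True
  then show ?thesis
  proof (elim disjE)
    assume "card C \<le> 1"
    then have "real (card C) - 1 \<le> 0" by simp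
    then have "real (card A) * real (card B) * (real (card C) - 1) \<le> 0"
      by (simp add: mult_nonneg_nonpos)
    then show ?thesis by (smt (verit) zero_le_power2)
  qed auto
next
  case False
  then have Ane: "A \<noteq> {}" and Bne: "B \<noteq> {}" and m2: "card C \<ge> 2" by auto
  have Cne: "C \<noteq> {}" using m2 by auto
  define g where "g = (\<lambda>a b c. a * (b + c::real))"
  have gX: "g a b c \<in> X" if "a \<in> A" "b \<in> B" "c \<in> C" for a b c
    using that unfolding X prodsumset_def g_def by blast
  have fX: "finite X"
  proof -
    have "X \<subseteq> (\<lambda>(a,b,c). a * (b + c)) ` (A \<times> B \<times> C)"
    proof
      fix x assume "x \<in> X"
      then obtain a b c where "x = a * (b + c)" "a \<in> A" "b \<in> B" "c \<in> C"
        unfolding X prodsumset_def by blast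
      then show "x \<in> (\<lambda>(a,b,c). a * (b + c)) ` (A \<times> B \<times> C)"
        by (intro image_eqI[of _ _ "(a,b,c)"]) auto
    qed
    then show ?thesis using finite_subset fA fB fC by blast
  qed
  define M where "M = Max C"
  have MC: "M \<in> C" unfolding M_def using fC Cne by simp
  define C' where "C' = C - {M}"
  have fC': "finite C'" using fC by (simp add: C'_def)
  have cardC': "real (card C') = real (card C) - 1"
    using MC fC m2 by (simp add: C'_def of_nat_diff)
  define sc where "sc = (\<lambda>c. Min {y\<in>C. c < y})"
  have sc: "sc c \<in> C \<and> c < sc c \<and> (\<forall>y\<in>C. c < y \<longrightarrow> sc c \<le> y)" if "c \<in> C'" for c
  proof -
    have "c \<le> M" using that fC unfolding C'_def M_def by simp
    then have "M \<in> {y\<in>C. c < y}" using that MC unfolding C'_def by auto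
    then have ne: "{y\<in>C. c < y} \<noteq> {}" by blast
    have fin: "finite {y\<in>C. c < y}" using fC by simp
    show ?thesis using Min_in[OF fin ne] Min_le[OF fin] unfolding sc_def by auto
  qed
  define cnt where "cnt = (\<lambda>x y. card {z\<in>X. x \<le> z \<and> z < y})"
  define n where "n = (\<lambda>(a,b,c). cnt (g a b c) (g a b (sc c)))"
  define S where "S = A \<times> B \<times> C'"
  have fS: "finite S" using fA fB fC' by (simp add: S_def)
  have cardS: "real (card S) = real (card A) * real (card B) * (real (card C) - 1)"
    using cardC' by (simp add: S_def card_cartesian_product)
  have gmono: "g a b c < g a b c'" if "a \<in> A" "c < c'" for a b c c'
    using that pos unfolding g_def by (simp add: algebra_simps)
  have gmono': "g a b c \<le> g a b c'" if "a \<in> A" "c \<le> c'" for a b c c'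
    using that pos unfolding g_def by (simp add: algebra_simps)
  have fact1: "(\<Sum>c\<in>C'. real (n (a,b,c))) \<le> real (card X)" if a: "a \<in> A" and b: "b \<in> B" for a b
  proof -
    define I where "I = (\<lambda>c. {z\<in>X. g a b c \<le> z \<and> z < g a b (sc c)})"
    have disj: "I c1 \<inter> I c2 = {}" if "c1 \<in> C'" "c2 \<in> C'" "c1 < c2" for c1 c2
    proof -
      have "sc c1 \<le> c2" using sc[OF that(1)] that C'_def by auto
      then have "g a b (sc c1) \<le> g a b c2" using gmono' a by blast
      then show ?thesis unfolding I_def by auto
    qed
    have "(\<Sum>c\<in>C'. card (I c)) = card (\<Union>(I ` C'))"
    proof (rule card_UN_disjoint[symmetric])
      show "finite C'" by fact
      show "\<forall>i\<in>C'. finite (I i)" using fX by (simp add: I_def)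
      show "\<forall>i\<in>C'. \<forall>j\<in>C'. i \<noteq> j \<longrightarrow> I i \<inter> I j = {}"
      proof (intro ballI impI)
        fix i j assume ij: "i \<in> C'" "j \<in> C'" "i \<noteq> j"
        show "I i \<inter> I j = {}"
        proof (cases "i < j")
          case True then show ?thesis using disj ij by blast
        next
          case False then have "j < i" using ij by simp
          then show ?thesis using disj[of j i] ij by blast
        qed
      qed
    qed
    also have "\<dots> \<le> card X" by (rule card_mono[OF fX]) (auto simp: I_def)
    finally have le: "(\<Sum>c\<in>C'. card (I c)) \<le> card X" .
    have r: "(\<Sum>c\<in>C'. real (card (I c))) \<le> real (card X)"
      unfolding of_nat_sum[symmetric] of_nat_le_iff by (rule le)
    have "(\<Sum>c\<in>C'. real (n (a,b,c))) = (\<Sum>c\<in>C'. real (card (I c)))"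
      by (simp add: n_def cnt_def I_def)
    then show ?thesis using r by simp
  qed
  have sum1: "(\<Sum>t\<in>S. real (n t)) \<le> real (card A) * real (card B) * real (card X)"
  proof -
    have "(\<Sum>t\<in>S. real (n t)) = (\<Sum>a\<in>A. \<Sum>b\<in>B. \<Sum>c\<in>C'. real (n (a,b,c)))"
      by (simp add: S_def sum.cartesian_product)
    also have "\<dots> \<le> (\<Sum>a\<in>A. \<Sum>b\<in>B. real (card X))"
      by (intro sum_mono fact1)
    also have "\<dots> = real (card A) * real (card B) * real (card X)" by simp
    finally show ?thesis .
  qed
  have Xne: "X \<noteq> {}" using gX Ane Bne Cne by blast
  then have Xpos: "card X > 0" using fX by (simp add: card_gt_0_iff)
  define D where "D = 2 * real (card X) / (real (card C) - 1)"
  have Dpos: "D > 0" using Xpos m2 by (simp add: D_def)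
  define G where "G = S \<inter> {t. real (n t) \<le> D}"
  define T where "T = (SIGMA c:C'. SIGMA x:X. {y\<in>X. x < y \<and> real (cnt x y) \<le> D})"
  have cardT: "real (card T) \<le> (real (card C) - 1) * real (card X) * D"
  proof -
    have "card T = (\<Sum>c\<in>C'. \<Sum>x\<in>X. card {y\<in>X. x < y \<and> real (cnt x y) \<le> D})"
      unfolding T_def using fC' fX by simp
    then have "real (card T) = (\<Sum>c\<in>C'. \<Sum>x\<in>X. real (card {y\<in>X. x < y \<and> real (cnt x y) \<le> D}))"
      by simp
    also have "\<dots> \<le> (\<Sum>c\<in>C'. \<Sum>x\<in>X. D)"
      by (intro sum_mono) (use rank_bound[OF fX _ less_imp_le[OF Dpos]] in \<open>simp add: cnt_def\<close>)
    also have "\<dots> = (real (card C) - 1) * real (card X) * D" using cardC' by simp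
    finally show ?thesis .
  qed
  have cardG: "real (card G) \<le> (real (card C) - 1) * real (card X) * D"
  proof -
    define h where "h = (\<lambda>(a,b,c). (c, g a b c, g a b (sc c)))"
    have inj: "inj_on h G"
    proof (rule inj_onI)
      fix t1 t2 assume t1: "t1 \<in> G" and t2: "t2 \<in> G" and eq: "h t1 = h t2"
      obtain a b c where t1e: "t1 = (a,b,c)" by (cases t1) auto
      obtain a' b' c' where t2e: "t2 = (a',b',c')" by (cases t2) auto
      have cc: "c' = c" and e1: "a * (b + c) = a' * (b' + c)"
        and e2: "a * (b + sc c) = a' * (b' + sc c)"
        using eq by (auto simp: h_def g_def t1e t2e)
      have cC: "c \<in> C'" using t1 by (simp add: G_def S_def t1e)
      have "a * (sc c - c) = a' * (sc c - c)" using e1 e2 by (simp add: algebra_simps)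
      moreover have "sc c - c \<noteq> 0" using sc[OF cC] by simp
      ultimately have aa: "a' = a" by simp
      have "a > 0" using t1 pos by (auto simp: G_def S_def t1e)
      then have "b' = b" using e1 aa by (simp add: algebra_simps)
      then show "t1 = t2" using aa cc t1e t2e by simp
    qed
    have sub: "h ` G \<subseteq> T"
    proof
      fix u assume "u \<in> h ` G"
      then obtain a b c where t: "(a,b,c) \<in> G" and u: "u = h (a,b,c)" by auto
      have a: "a \<in> A" and b: "b \<in> B" and c: "c \<in> C'" and nD: "real (n (a,b,c)) \<le> D"
        using t by (auto simp: G_def S_def)
      have "c \<in> C" using c C'_def by auto
      then show "u \<in> T" using sc[OF c] a b c nD gX gmono
        by (auto simp: T_def u h_def n_def)
    qed
    have fT: "finite T" unfolding T_def using fC' fX by auto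
    have "card G = card (h ` G)" using inj by (simp add: card_image)
    also have "\<dots> \<le> card T" by (rule card_mono[OF fT sub])
    finally show ?thesis using cardT by linarith
  qed
  have pt: "1 \<le> real (n t) / D + (if real (n t) \<le> D then 1 else 0)" for t
    using Dpos by (auto simp: field_simps)
  have "real (card S) = (\<Sum>t\<in>S. 1)" by simp
  also have "\<dots> \<le> (\<Sum>t\<in>S. real (n t) / D + (if real (n t) \<le> D then 1 else 0))"
    by (intro sum_mono pt)
  also have "\<dots> = (\<Sum>t\<in>S. real (n t)) / D + real (card G)"
    by (simp add: sum.distrib sum_divide_distrib[symmetric] G_def sum.If_cases[OF fS])
  also have "\<dots> \<le> real (card A) * real (card B) * real (card X) / D
       + (real (card C) - 1) * real (card X) * D"
    using sum1 cardG Dpos by (simp add: divide_right_mono add_mono)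
  finally have main: "real (card S) \<le> real (card A) * real (card B) * real (card X) / D
       + (real (card C) - 1) * real (card X) * D" .
  have m1: "real (card C) - 1 > 0" using m2 by simp
  have e1: "real (card A) * real (card B) * real (card X) / D
      = real (card A) * real (card B) * (real (card C) - 1) / 2"
    using Xpos m1 by (simp add: D_def field_simps)
  have e2: "(real (card C) - 1) * real (card X) * D = 2 * real (card X)^2"
    using m1 by (simp add: D_def field_simps power2_eq_square)
  show ?thesis using main e1 e2 cardS by linarith
qed

lemma ps_comm: "prodsumset A B C = prodsumset A C B"
  unfolding prodsumset_def by (auto simp: add.commute) (metis add.commute)+

lemma ps_neg: "prodsumset (uminus ` A) B C = uminus ` prodsumset A B C"
proof
  show "prodsumset (uminus ` A) B C \<subseteq> uminus ` prodsumset A B C"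
  proof
    fix x assume "x \<in> prodsumset (uminus ` A) B C"
    then obtain a b c where "x = - a * (b + c)" "a \<in> A" "b \<in> B" "c \<in> C"
      unfolding prodsumset_def by blast
    then show "x \<in> uminus ` prodsumset A B C"
      by (intro image_eqI[of _ _ "a * (b + c)"]) (auto simp: prodsumset_def)
  qed
  show "uminus ` prodsumset A B C \<subseteq> prodsumset (uminus ` A) B C"
  proof
    fix x assume "x \<in> uminus ` prodsumset A B C"
    then obtain a b c where "x = - (a * (b + c))" "a \<in> A" "b \<in> B" "c \<in> C"
      unfolding prodsumset_def by blast
    then show "x \<in> prodsumset (uminus ` A) B C"
      unfolding prodsumset_def by (intro CollectI exI[of _ "-a"] exI[of _ b] exI[of _ c]) auto
  qed
qed

lemma ps_mono: "A1 \<subseteq> A \<Longrightarrow> prodsumset A1 B C \<subseteq> prodsumset A B C"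
  unfolding prodsumset_def by blast

lemma ps_finite:
  assumes "finite A" "finite B" "finite C"
  shows "finite (prodsumset A B C)"
proof -
  have "prodsumset A B C \<subseteq> (\<lambda>(a,b,c). a * (b + c)) ` (A \<times> B \<times> C)"
  proof
    fix x assume "x \<in> prodsumset A B C"
    then obtain a b c where "x = a * (b + c)" "a \<in> A" "b \<in> B" "c \<in> C"
      unfolding prodsumset_def by blast
    then show "x \<in> (\<lambda>(a,b,c). a * (b + c)) ` (A \<times> B \<times> C)"
      by (intro image_eqI[of _ _ "(a,b,c)"]) auto
  qed
  then show ?thesis using finite_subset assms by blast
qed

lemma pos_part:
  fixes A :: "real set"
  assumes fA: "finite A" and A0: "A \<noteq> {0}" and Ane: "A \<noteq> {}"
  shows "\<exists>A1. finite A1 \<and> (\<forall>a\<in>A1. a > 0) \<and> real (card A) \<le> 4 * real (card A1) \<and>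
     (\<forall>B C. finite B \<longrightarrow> finite C \<longrightarrow> card (prodsumset A1 B C) \<le> card (prodsumset A B C))"
proof -
  define Ap where "Ap = {a\<in>A. a > 0}"
  define An where "An = {a\<in>A. a < 0}"
  have fAp: "finite Ap" and fAn: "finite An" using fA by (auto simp: Ap_def An_def)
  have split: "A - {0} = Ap \<union> An" by (auto simp: Ap_def An_def)
  have dis: "Ap \<inter> An = {}" by (auto simp: Ap_def An_def)
  have c1: "card (A - {0}) = card Ap + card An"
    using split dis fAp fAn by (simp add: card_Un_disjoint)
  have c2: "card A \<le> 2 * card (A - {0})"
  proof (cases "0 \<in> A")
    case True
    then obtain y where "y \<in> A" "y \<noteq> 0" using A0 Ane by blast
    then have "{0, y} \<subseteq> A" using True by auto
    then have "card {0, y} \<le> card A" by (rule card_mono[OF fA])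
    moreover have "card {0::real, y} = 2" using \<open>y \<noteq> 0\<close> by simp
    ultimately have "2 \<le> card A" by simp
    moreover have "card (A - {0}) = card A - 1" using True fA by simp
    ultimately show ?thesis by linarith
  next
    case False
    then show ?thesis by simp
  qed
  show ?thesis
  proof (cases "card An \<le> card Ap")
    case True
    show ?thesis
    proof (intro exI[of _ Ap] conjI allI impI)
      show "finite Ap" by fact
      show "\<forall>a\<in>Ap. a > 0" by (simp add: Ap_def)
      show "real (card A) \<le> 4 * real (card Ap)" using c1 c2 True by linarith
      fix B C :: "real set" assume fB: "finite B" and fC: "finite C"
      have "prodsumset Ap B C \<subseteq> prodsumset A B C" by (rule ps_mono) (auto simp: Ap_def)
      then show "card (prodsumset Ap B C) \<le> card (prodsumset A B C)"
        by (rule card_mono[OF ps_finite[OF fA fB fC]])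
    qed
  next
    case False
    show ?thesis
    proof (intro exI[of _ "uminus ` An"] conjI allI impI)
      show "finite (uminus ` An)" using fAn by simp
      show "\<forall>a\<in>uminus ` An. a > 0" by (auto simp: An_def)
      have "card (uminus ` An) = card An" by (simp add: card_image)
      then show "real (card A) \<le> 4 * real (card (uminus ` An))" using c1 c2 False by linarith
      fix B C :: "real set" assume fB: "finite B" and fC: "finite C"
      have "card (prodsumset (uminus ` An) B C) = card (prodsumset An B C)"
        by (simp add: ps_neg card_image)
      also have "\<dots> \<le> card (prodsumset A B C)"
        by (rule card_mono[OF ps_finite[OF fA fB fC] ps_mono]) (auto simp: An_def)
      finally show "card (prodsumset (uminus ` An) B C) \<le> card (prodsumset A B C)" .
    qed
  qed
qed

lemma key:
  fixes A B C :: "real set"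
  assumes fA: "finite A" and A0: "A \<noteq> {0}" and fB: "finite B" and fC: "finite C"
    and S0: "sumset B C \<noteq> {0}"
    and ne: "A \<noteq> {}" "B \<noteq> {}" "C \<noteq> {}"
  shows "real (card A) * real (card B) * real (card C) \<le> 36 * real (card (prodsumset A B C))^2"
proof -
  define x where "x = real (card (prodsumset A B C))"
  have x0: "x \<ge> 0" by (simp add: x_def)
  obtain A1 where fA1: "finite A1" and p1: "\<forall>a\<in>A1. a > 0" and cA1: "real (card A) \<le> 4 * real (card A1)"
    and sub: "\<And>B C. finite B \<Longrightarrow> finite C \<Longrightarrow> card (prodsumset A1 B C) \<le> card (prodsumset A B C)"
    using pos_part[OF fA A0 ne(1)] by blast
  have gen: "real (card A) * real (card U) * real (card V) \<le> 36 * x^2"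
    if fU: "finite U" and fV: "finite V" and V2: "card V \<ge> 2"
      and UV1: "prodsumset A1 U V = prodsumset A1 B C" for U V
  proof -
    have c: "real (card A1) * real (card U) * (real (card V) - 1) \<le> 4 * real (card (prodsumset A1 U V))^2"
      using core[OF fA1 fU fV p1 refl] .
    have "real (card (prodsumset A1 U V)) \<le> x"
      using sub[OF fB fC] UV1 by (simp add: x_def)
    then have "real (card (prodsumset A1 U V))^2 \<le> x^2" by (intro power_mono) auto
    then have c': "real (card A1) * real (card U) * (real (card V) - 1) \<le> 4 * x^2" using c by linarith
    have "real (card A) * real (card U) * real (card V)
        \<le> (4 * real (card A1)) * real (card U) * (2 * (real (card V) - 1))"
      using cA1 V2 by (intro mult_mono) auto
    also have "\<dots> = 8 * (real (card A1) * real (card U) * (real (card V) - 1))" by simp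
    also have "\<dots> \<le> 32 * x^2" using c' by linarith
    also have "\<dots> \<le> 36 * x^2" by simp
    finally show ?thesis .
  qed
  show ?thesis
  proof (cases "card C \<ge> 2")
    case True
    show ?thesis using gen[OF fB fC True refl] by (simp add: x_def)
  next
    case C1: False
    show ?thesis
    proof (cases "card B \<ge> 2")
      case True
      have "real (card A) * real (card C) * real (card B) \<le> 36 * x^2"
        using gen[OF fC fB True ps_comm[symmetric]] .
      then show ?thesis by (simp add: x_def mult_ac)
    next
      case False
      have "card C \<noteq> 0" using ne fC by simp
      then have "card C = 1" using C1 by linarith
      then obtain c where Cc: "C = {c}" by (metis One_nat_def card_1_singleton_iff)
      have "card B \<noteq> 0" using ne fB by simp
      then have "card B = 1" using False by linarith
      then obtain b where Bb: "B = {b}" by (metis One_nat_def card_1_singleton_iff)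
      have "sumset B C = {b + c}" by (auto simp: sumset_def Bb Cc)
      then have s0: "b + c \<noteq> 0" using S0 by auto
      have "prodsumset A B C = (\<lambda>a. a * (b + c)) ` A" by (auto simp: prodsumset_def Bb Cc)
      moreover have "inj_on (\<lambda>a. a * (b + c)) A" using s0 by (auto simp: inj_on_def)
      ultimately have "card (prodsumset A B C) = card A" by (simp add: card_image)
      then have xa: "x = real (card A)" by (simp add: x_def)
      have "card A > 0" using ne fA by (simp add: card_gt_0_iff)
      then have "real (card A) \<ge> 1" by simp
      then have "real (card A) \<le> 36 * real (card A)^2" by (simp add: power2_eq_square)
      then show ?thesis using Bb Cc xa by (simp add: x_def)
    qed
  qed
qed

theorem lemma3p3:
  shows "\<exists>c::real > 0. \<forall>A B C :: real set.
           finite A \<longrightarrow> A \<noteq> {0} \<longrightarrow> finite B \<longrightarrow> finite C \<longrightarrow> sumset B C \<noteq> {0} \<longrightarrow>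
           real (card (prodsumset A B C)) \<ge> c * sqrt (real (card A) * real (card B) * real (card C))"
proof (intro exI[of _ "1/6"] conjI allI impI)
  show "(1/6::real) > 0" by simp
  fix A B C :: "real set"
  assume fA: "finite A" and A0: "A \<noteq> {0}" and fB: "finite B" and fC: "finite C"
    and S0: "sumset B C \<noteq> {0}"
  show "real (card (prodsumset A B C)) \<ge> 1/6 * sqrt (real (card A) * real (card B) * real (card C))"
  proof (cases "A = {} \<or> B = {} \<or> C = {}")
    case True
    then show ?thesis by auto
  next
    case False
    then have k: "real (card A) * real (card B) * real (card C) \<le> (6 * real (card (prodsumset A B C)))^2"
      using key[OF fA A0 fB fC S0] by (simp add: power_mult_distrib)
    have "sqrt (real (card A) * real (card B) * real (card C)) \<le> 6 * real (card (prodsumset A B C))"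
      by (rule real_le_lsqrt[OF _ k]) simp
    then show ?thesis by simp
  qed
qed

end
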